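(* Let $G=(V,E)$ be a rooted tree with root $t_0$, let $1\le p<\infty$, and let ${\bm\nu}=\{\nu_t\}_{t\in V}$, ${\bm\mu}=\{\mu_t\}_{t\in V}$ be two weights (positive sequences) over $V$ with $\sum_{t\in V}\nu_t<\infty$ and $\sum_{t\in V}\mu_t<\infty$. Suppose there is a constant $C$ such that for every sequence ${\bm b}=\{b_t\}_{t\in V}$, $$\Big(\sum_{t\in V}\nu_t\Big|\sum_{t_0\prec u\preceq t}b_u\Big|^p\Big)^{1/p}\le C\Big(\sum_{t\in V}\mu_t|b_t|^p\Big)^{1/p}.$$ Then there is a constant $C_P$, depending only on $C$ (and $p$), such that for every sequence ${\bm b}=\{b_t\}_{t\in V}$, $$\Big(\sum_{t\in V}|b_t-\bar b|^p\nu_t\Big)^{1/p}\le C_P\Big(\sum_{t\succ t_0}|b_t-b_{t_p}|^p\mu_t\Big)^{1/p},\qquad \bar b=\frac{\sum_{t\in V}b_t\nu_t}{\sum_{t\in V}\nu_t}.$$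
   Context: A tree is a connected graph without cycles; a rooted tree has a distinguished vertex $t_0$ (the root). The partial order $\preceq$ on $V$ is defined by $r\preceq t$ if $r$ lies on the unique path from $t$ to $t_0$; $r\prec t$ means $r\preceq t$ and $r\neq t$. For $t\neq t_0$, $t_p$ denotes the parent of $t$, i.e. the first vertex after $t$ on the path from $t$ to $t_0$. *)

theory Defs
  imports "HOL-Analysis.Analysis"
begin

definition is_gpath :: "('a \<Rightarrow> 'a \<Rightarrow> bool) \<Rightarrow> 'a list \<Rightarrow> bool" where
  "is_gpath E xs \<longleftrightarrow> xs \<noteq> [] \<and> distinct xs \<and>
     (\<forall>i. Suc i < length xs \<longrightarrow> E (xs ! i) (xs ! Suc i))"

definition is_tree :: "'a set \<Rightarrow> ('a \<Rightarrow> 'a \<Rightarrow> bool) \<Rightarrow> bool" where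
  "is_tree V E \<longleftrightarrow>
     (\<forall>x y. E x y \<longrightarrow> x \<in> V \<and> y \<in> V \<and> x \<noteq> y \<and> E y x) \<and>
     (\<forall>x\<in>V. \<forall>y\<in>V. \<exists>xs. is_gpath E xs \<and> hd xs = x \<and> last xs = y) \<and>
     (\<nexists>xs. is_gpath E xs \<and> 3 \<le> length xs \<and> E (last xs) (hd xs))"

definition rooted_tree :: "'a set \<Rightarrow> ('a \<Rightarrow> 'a \<Rightarrow> bool) \<Rightarrow> 'a \<Rightarrow> bool" where
  "rooted_tree V E t0 \<longleftrightarrow> is_tree V E \<and> t0 \<in> V"

definition tree_path :: "('a \<Rightarrow> 'a \<Rightarrow> bool) \<Rightarrow> 'a \<Rightarrow> 'a \<Rightarrow> 'a list" where
  "tree_path E t0 t = (THE xs. is_gpath E xs \<and> hd xs = t \<and> last xs = t0)"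

definition tree_le :: "('a \<Rightarrow> 'a \<Rightarrow> bool) \<Rightarrow> 'a \<Rightarrow> 'a \<Rightarrow> 'a \<Rightarrow> bool" where
  "tree_le E t0 r t \<longleftrightarrow> r \<in> set (tree_path E t0 t)"

definition tree_less :: "('a \<Rightarrow> 'a \<Rightarrow> bool) \<Rightarrow> 'a \<Rightarrow> 'a \<Rightarrow> 'a \<Rightarrow> bool" where
  "tree_less E t0 r t \<longleftrightarrow> tree_le E t0 r t \<and> r \<noteq> t"

text \<open>Parent t_p of t \<noteq> t0: the vertex after t on the path from t to t0.\<close>
definition tree_parent :: "('a \<Rightarrow> 'a \<Rightarrow> bool) \<Rightarrow> 'a \<Rightarrow> 'a \<Rightarrow> 'a" where
  "tree_parent E t0 t = tree_path E t0 t ! 1"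

end

theory Submission
  imports Defs
begin


lemma gpath_succ: "is_gpath E xs \<longleftrightarrow> xs \<noteq> [] \<and> distinct xs \<and> successively E xs"
  unfolding is_gpath_def successively_conv_nth by blast

lemma distinct_hd_last:
  assumes "distinct xs" "xs \<noteq> []" "hd xs = last xs" shows "xs = [hd xs]"
proof -
  have "hd xs = xs ! 0" using assms(2) by (simp add: hd_conv_nth)
  moreover have "last xs = xs ! (length xs - 1)" using assms(2) by (simp add: last_conv_nth)
  ultimately have "0 = length xs - 1" using assms nth_eq_iff_index_eq by fastforce
  then have "length xs = 1" using assms(2) by (cases xs) auto
  then show ?thesis by (cases xs) auto
qed

lemma succ_glue: "successively P (xs @ [z]) \<Longrightarrow> successively P (z # ys) \<Longrightarrow> successively P (xs @ z # ys)"
  by (induction xs) (auto simp: successively_Cons hd_append)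

lemma cycle_from_two:
  assumes sym: "\<forall>x y. E x y \<longrightarrow> E y x"
    and pa: "is_gpath E (x # A)" and pb: "is_gpath E (x # B)"
    and ne: "A \<noteq> []" "B \<noteq> []" and l: "last A = last B" and h: "hd A \<noteq> hd B"
  shows "\<exists>xs. is_gpath E xs \<and> 3 \<le> length xs \<and> E (last xs) (hd xs)"
proof -
  have "\<exists>v\<in>set A. v \<in> set B" using ne l by (metis last_in_set)
  then obtain A1 z A2 where A: "A = A1 @ z # A2" and zB: "z \<in> set B" and A1: "\<forall>y\<in>set A1. y \<notin> set B"
    using split_list_first_prop[of A "\<lambda>v. v \<in> set B"] by blast
  obtain B1 B2 where B: "B = B1 @ z # B2" and zB1: "z \<notin> set B1"
    using split_list_first[OF zB] by blast
  define cyc where "cyc = (x # A1) @ rev (B1 @ [z])"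
  have dA: "distinct (x # A)" and sA: "successively E (x # A)" using pa gpath_succ by blast+
  have dB: "distinct (x # B)" and sB: "successively E (x # B)" using pb gpath_succ by blast+
  have "distinct cyc" using dA dB A1 zB1 unfolding cyc_def A B by auto
  moreover have "3 \<le> length cyc"
  proof -
    have "A1 \<noteq> [] \<or> B1 \<noteq> []" using h A B by auto
    then show ?thesis unfolding cyc_def by (cases A1; cases B1) auto
  qed
  moreover have "successively E cyc"
  proof -
    have "x # A = (x # A1 @ [z]) @ A2" unfolding A by simp
    then have s1: "successively E (x # A1 @ [z])" using sA
      by (metis successively_append_iff)
    have "x # B = (x # B1 @ [z]) @ B2" unfolding B by simp
    then have "successively E (x # B1 @ [z])" using sB
      by (metis successively_append_iff)
    then have s2: "successively E (B1 @ [z])" by (simp add: successively_Cons)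
    have s2': "successively E (rev (B1 @ [z]))"
    proof -
      have "successively (\<lambda>a b. E b a) (B1 @ [z])"
        using s2 sym successively_mono[of E "B1 @ [z]" "\<lambda>a b. E b a"] by blast
      then show ?thesis by (simp only: successively_rev)
    qed
    show ?thesis unfolding cyc_def using succ_glue[of E "x # A1" z "rev B1"] s1 s2' by simp
  qed
  moreover have "E (last cyc) (hd cyc)"
  proof -
    have "last cyc = hd B" unfolding cyc_def B by (cases B1) auto
    moreover have "E x (hd B)" using sB ne by (simp add: successively_Cons)
    ultimately show ?thesis using sym by (simp add: cyc_def)
  qed
  ultimately show ?thesis unfolding gpath_succ by (intro exI[of _ cyc]) (auto simp: cyc_def)
qed

lemma path_unique:
  assumes sym: "\<forall>x y. E x y \<longrightarrow> E y x"
    and nocyc: "\<nexists>xs. is_gpath E xs \<and> 3 \<le> length xs \<and> E (last xs) (hd xs)"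
  shows "is_gpath E P \<Longrightarrow> is_gpath E Q \<Longrightarrow> hd P = hd Q \<Longrightarrow> last P = last Q \<Longrightarrow> P = Q"
proof (induction P arbitrary: Q)
  case Nil
  then show ?case by (simp add: is_gpath_def)
next
  case (Cons x P')
  have dP: "distinct (x # P')" and sP: "successively E (x # P')" using Cons.prems gpath_succ by blast+
  have dQ: "distinct Q" and sQ: "successively E Q" and Qne: "Q \<noteq> []" using Cons.prems gpath_succ by blast+
  obtain Q' where Q: "Q = x # Q'" using Qne Cons.prems(3) by (cases Q) auto
  show ?case
  proof (cases "P' = []")
    case True
    then have "hd Q = last Q" using Cons.prems by simp
    then have "Q = [hd Q]" using distinct_hd_last dQ Qne by blast
    then show ?thesis using True Q by simp
  next
    case False
    have Q'ne: "Q' \<noteq> []"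
    proof
      assume "Q' = []"
      then have "last P' = x" using Cons.prems(4) Q False by simp
      then show False using dP False last_in_set by fastforce
    qed
    have gP': "is_gpath E P'" using dP sP False by (simp add: gpath_succ successively_Cons)
    have gQ': "is_gpath E Q'" using dQ sQ Q'ne Q by (simp add: gpath_succ successively_Cons)
    have l: "last P' = last Q'" using Cons.prems(4) Q False Q'ne by simp
    show ?thesis
    proof (cases "hd P' = hd Q'")
      case True
      then show ?thesis using Cons.IH[OF gP' gQ' True l] Q by simp
    next
      case False
      have "is_gpath E (x # P')" "is_gpath E (x # Q')" using Cons.prems(1,2) Q by simp_all
      from cycle_from_two[OF sym this \<open>P' \<noteq> []\<close> Q'ne l False] nocyc
      show ?thesis by blast
    qed
  qed
qed

lemma tree_path_eq:
  assumes "is_tree V E" "is_gpath E xs" "last xs = t0"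
  shows "tree_path E t0 (hd xs) = xs"
proof -
  have sym: "\<forall>x y. E x y \<longrightarrow> E y x" using assms(1) unfolding is_tree_def by meson
  have nocyc: "\<nexists>xs. is_gpath E xs \<and> 3 \<le> length xs \<and> E (last xs) (hd xs)"
    using assms(1) unfolding is_tree_def by (elim conjE)
  show ?thesis unfolding tree_path_def
  proof (rule the_equality)
    show "is_gpath E xs \<and> hd xs = hd xs \<and> last xs = t0" using assms by simp
    fix ys assume "is_gpath E ys \<and> hd ys = hd xs \<and> last ys = t0"
    then show "ys = xs" using path_unique[OF sym nocyc, of ys xs] assms by simp
  qed
qed

lemma tree_path_props:
  assumes "rooted_tree V E t0" "t \<in> V"
  shows "is_gpath E (tree_path E t0 t) \<and> hd (tree_path E t0 t) = t \<and> last (tree_path E t0 t) = t0"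
proof -
  have T: "is_tree V E" "t0 \<in> V" using assms(1) unfolding rooted_tree_def by simp_all
  have "\<forall>x\<in>V. \<forall>y\<in>V. \<exists>xs. is_gpath E xs \<and> hd xs = x \<and> last xs = y"
    using T(1) unfolding is_tree_def by (elim conjE)
  then obtain xs where "is_gpath E xs" "hd xs = t" "last xs = t0" using assms(2) T(2) by blast
  then show ?thesis using tree_path_eq[OF T(1)] by metis
qed

lemma gpath_drop:
  assumes "is_gpath E xs" "k < length xs" shows "is_gpath E (drop k xs)"
  using assms unfolding is_gpath_def by auto

lemma telescope:
  fixes b :: "'a \<Rightarrow> real"
  assumes rt: "rooted_tree V E t0" and t: "t \<in> V"
  shows "(\<Sum>u\<in>{u\<in>V. tree_less E t0 t0 u \<and> tree_le E t0 u t}.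
           (if u \<in> V \<and> tree_less E t0 t0 u then b u - b (tree_parent E t0 u) else 0)) = b t - b t0"
proof -
  define P where "P = tree_path E t0 t"
  define n where "n = length P - 1"
  have T: "is_tree V E" "t0 \<in> V" using rt unfolding rooted_tree_def by simp_all
  have edgeV: "\<And>x y. E x y \<Longrightarrow> x \<in> V" using T(1) unfolding is_tree_def by meson
  have gP: "is_gpath E P" and hP: "hd P = t" and lP: "last P = t0"
    using tree_path_props[OF rt t] unfolding P_def by simp_all
  have Pne: "P \<noteq> []" and dP: "distinct P" using gP unfolding is_gpath_def by simp_all
  have len: "length P = Suc n" unfolding n_def using Pne by (cases P) auto
  have P0: "P ! 0 = t" using hP Pne by (simp add: hd_conv_nth)
  have Pn: "P ! n = t0" using lP Pne by (simp add: last_conv_nth n_def)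
  have PV: "P ! k \<in> V" if "k < length P" for k
  proof (cases "k = n")
    case True then show ?thesis using Pn T by simp
  next
    case False
    then have "Suc k < length P" using that len by simp
    then have "E (P ! k) (P ! Suc k)" using gP unfolding is_gpath_def by blast
    then show ?thesis using edgeV by blast
  qed
  have tp: "tree_path E t0 (P ! k) = drop k P" if "k < length P" for k
  proof -
    have "tree_path E t0 (hd (drop k P)) = drop k P"
      using tree_path_eq[OF T(1) gpath_drop[OF gP that]] lP that by simp
    then show ?thesis using that by (simp add: hd_drop_conv_nth)
  qed
  have S2: "P ! k \<in> V \<and> tree_less E t0 t0 (P ! k) \<and> tree_le E t0 (P ! k) t" if k: "k < n" for k
  proof -
    have kl: "k < length P" using k len by simp
    have "t0 \<in> set (drop k P)" using lP kl
      by (metis drop_eq_Nil last_drop last_in_set not_le)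
    moreover have "P ! k \<noteq> t0" using Pn dP k len nth_eq_iff_index_eq by fastforce
    ultimately have "tree_less E t0 t0 (P ! k)" unfolding tree_less_def tree_le_def using tp[OF kl] by auto
    moreover have "tree_le E t0 (P ! k) t" unfolding tree_le_def P_def[symmetric] using kl by simp
    ultimately show ?thesis using PV[OF kl] by simp
  qed
  have S1: "u \<in> (\<lambda>k. P ! k) ` {..<n}" if u: "u \<in> V" "tree_less E t0 t0 u" "tree_le E t0 u t" for u
  proof -
    have "u \<in> set P" using u unfolding tree_le_def P_def by simp
    then obtain k where k: "k < length P" "u = P ! k" by (metis in_set_conv_nth)
    have "k \<noteq> n" using u(2) k Pn unfolding tree_less_def by auto
    then show "u \<in> (\<lambda>k. P ! k) ` {..<n}" using k len by auto
  qed
  have S: "{u\<in>V. tree_less E t0 t0 u \<and> tree_le E t0 u t} = (\<lambda>k. P ! k) ` {..<n}"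
    using S1 S2 by blast
  have inj: "inj_on (\<lambda>k. P ! k) {..<n}" using dP len by (auto simp: inj_on_def nth_eq_iff_index_eq)
  have par: "tree_parent E t0 (P ! k) = P ! Suc k" if "k < n" for k
  proof -
    have "k < length P" using that len by simp
    then have "tree_parent E t0 (P ! k) = drop k P ! 1" unfolding tree_parent_def using tp by simp
    also have "\<dots> = P ! Suc k" using that len by simp
    finally show ?thesis .
  qed
  have "(\<Sum>u\<in>{u\<in>V. tree_less E t0 t0 u \<and> tree_le E t0 u t}.
           (if u \<in> V \<and> tree_less E t0 t0 u then b u - b (tree_parent E t0 u) else 0))
     = (\<Sum>u\<in>{u\<in>V. tree_less E t0 t0 u \<and> tree_le E t0 u t}. b u - b (tree_parent E t0 u))"
    by (rule sum.cong) auto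
  also have "\<dots> = (\<Sum>k<n. b (P ! k) - b (tree_parent E t0 (P ! k)))"
    unfolding S by (rule sum.reindex[OF inj, unfolded comp_def])
  also have "\<dots> = (\<Sum>k<n. b (P ! k) - b (P ! Suc k))"
    by (rule sum.cong) (auto simp: par)
  also have "\<dots> = b t - b t0" using sum_lessThan_telescope'[of "\<lambda>k. b (P ! k)" n] P0 Pn by simp
  finally show ?thesis .
qed



lemma tangent_powr:
  fixes x M p :: real
  assumes p: "1 \<le> p" and x: "0 \<le> x" and M: "0 \<le> M"
  shows "M powr p + p * M powr (p - 1) * (x - M) \<le> x powr p"
proof (cases "M = 0")
  case True then show ?thesis by simp
next
  case False
  then have Mp: "M > 0" using M by simp
  have "M powr (p - 1) * M = M powr (p - 1) * M powr 1" using Mp by simp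
  also have "\<dots> = M powr (p - 1 + 1)" by (simp only: powr_add)
  also have "\<dots> = M powr p" by simp
  finally have MM: "M powr (p - 1) * M = M powr p" .
  show ?thesis
  proof (cases "x = 0")
    case True
    have "M powr p + p * M powr (p - 1) * (x - M) = M powr p * (1 - p)"
      using True MM by (simp add: algebra_simps)
    also have "\<dots> \<le> 0" using p by (simp add: mult_nonneg_nonpos)
    finally show ?thesis using True by simp
  next
    case False
    then have xp: "x > 0" using x by simp
    have "x powr p - M powr p \<ge> p * M powr (p - 1) * (x - M)"
    proof (rule convex_on_imp_above_tangent[where A = "{0<..}"])
      show "convex_on {0<..} (\<lambda>x. x powr p)" using powr_convex[OF p] .
      show "connected {0::real<..}" by simp
      show "M \<in> interior {0<..}" using Mp by (simp add: interior_open)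
      show "x \<in> {0<..}" using xp by simp
      show "((\<lambda>x. x powr p) has_field_derivative p * M powr (p - 1)) (at M within {0<..})"
        using has_real_derivative_powr[OF Mp] by (rule has_field_derivative_at_within)
    qed
    then show ?thesis by simp
  qed
qed

lemma powr_diff_bound:
  fixes x y p :: real
  assumes p: "0 \<le> p"
  shows "\<bar>x - y\<bar> powr p \<le> 2 powr p * (\<bar>x\<bar> powr p + \<bar>y\<bar> powr p)"
proof -
  have "\<bar>x - y\<bar> \<le> 2 * max \<bar>x\<bar> \<bar>y\<bar>" by auto
  then have "\<bar>x - y\<bar> powr p \<le> (2 * max \<bar>x\<bar> \<bar>y\<bar>) powr p" using p by (simp add: powr_mono2)
  also have "\<dots> = 2 powr p * max \<bar>x\<bar> \<bar>y\<bar> powr p" by (simp add: powr_mult)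
  also have "\<dots> \<le> 2 powr p * (\<bar>x\<bar> powr p + \<bar>y\<bar> powr p)"
    by (intro mult_left_mono) (auto simp: max_def)
  finally show ?thesis .
qed

lemma abs_le_one_plus_powr:
  fixes x p :: real
  assumes p: "1 \<le> p"
  shows "\<bar>x\<bar> \<le> 1 + \<bar>x\<bar> powr p"
proof (cases "\<bar>x\<bar> \<le> 1")
  case True then show ?thesis using powr_ge_zero[of "\<bar>x\<bar>" p] by linarith
next
  case False
  then have "\<bar>x\<bar> powr 1 \<le> \<bar>x\<bar> powr p" using p by (intro powr_mono) auto
  then show ?thesis using False by simp
qed

lemma summable_comparison_real:
  fixes f g :: "'a \<Rightarrow> real"
  assumes "g summable_on A" "\<And>x. x \<in> A \<Longrightarrow> \<bar>f x\<bar> \<le> g x"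
  shows "f summable_on A"
proof -
  have h: "\<And>x. x \<in> A \<Longrightarrow> norm (f x) \<le> norm (g x)" using assms(2) by force
  have gs: "(\<lambda>x. norm (g x)) summable_on A" using assms(1) summable_on_iff_abs_summable_on_real by blast
  have "(\<lambda>x. norm (f x)) summable_on A"
    by (rule Infinite_Sum.abs_summable_on_comparison_test[of g A f, OF gs h])
  then show ?thesis using summable_on_iff_abs_summable_on_real by blast
qed

lemma enn_infsum_real:
  fixes f :: "'a \<Rightarrow> real"
  assumes "f summable_on A" "\<And>x. x \<in> A \<Longrightarrow> 0 \<le> f x"
  shows "(\<Sum>\<^sub>\<infinity>x\<in>A. ennreal (f x)) = ennreal (\<Sum>\<^sub>\<infinity>x\<in>A. f x)"
proof -
  have "infsum (ennreal \<circ> f) A = ennreal (infsum f A)"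
  proof (rule infsum_comm_additive_general)
    show "sum (ennreal \<circ> f) F = ennreal (sum f F)" if "finite F" "F \<subseteq> A" for F
      using that assms(2) by (metis (mono_tags, lifting) comp_def subsetD sum.cong sum_ennreal)
  qed (use assms in auto)
  then show ?thesis by (simp add: comp_def)
qed

lemma enn_infsum_finite:
  fixes f :: "'a \<Rightarrow> real"
  assumes nn: "\<And>x. x \<in> A \<Longrightarrow> 0 \<le> f x" and fin: "(\<Sum>\<^sub>\<infinity>x\<in>A. ennreal (f x)) < \<infinity>"
  shows "f summable_on A"
proof (rule nonneg_bdd_above_summable_on)
  show "0 \<le> f x" if "x \<in> A" for x using nn that .
  let ?S = "(\<Sum>\<^sub>\<infinity>x\<in>A. ennreal (f x))"
  show "bdd_above (sum f ` {F. F \<subseteq> A \<and> finite F})"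
  proof (rule bdd_aboveI2)
    fix F assume F: "F \<in> {F. F \<subseteq> A \<and> finite F}"
    have "ennreal (sum f F) = (\<Sum>x\<in>F. ennreal (f x))"
      using F nn by (intro sum_ennreal[symmetric]) auto
    also have "\<dots> = (\<Sum>\<^sub>\<infinity>x\<in>F. ennreal (f x))" using F by simp
    also have "\<dots> \<le> ?S"
      by (rule infsum_mono_neutral) (use F in \<open>auto simp: nonneg_summable_on_complete\<close>)
    finally have "ennreal (sum f F) \<le> ?S" .
    then have "enn2real (ennreal (sum f F)) \<le> enn2real ?S"
      using fin by (intro enn2real_mono) auto
    moreover have "0 \<le> sum f F" using F nn by (intro sum_nonneg) auto
    ultimately show "sum f F \<le> enn2real ?S" by simp
  qed
qed



lemma main:
  fixes p C :: real and \<nu> \<mu> b :: "'a \<Rightarrow> real"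
  assumes p: "1 \<le> p" and C: "0 \<le> C" and rt: "rooted_tree V E t0"
    and \<nu>pos: "\<forall>t\<in>V. 0 < \<nu> t" and \<mu>pos: "\<forall>t\<in>V. 0 < \<mu> t" and \<nu>s: "\<nu> summable_on V"
    and hyp: "\<forall>b::'a \<Rightarrow> real.
        (\<Sum>\<^sub>\<infinity>t\<in>V. ennreal (\<nu> t * \<bar>\<Sum>u\<in>{u\<in>V. tree_less E t0 t0 u \<and> tree_le E t0 u t}. b u\<bar> powr p))
        \<le> ennreal (C powr p) * (\<Sum>\<^sub>\<infinity>t\<in>V. ennreal (\<mu> t * \<bar>b t\<bar> powr p))"
  shows "(\<Sum>\<^sub>\<infinity>t\<in>V. ennreal (\<bar>b t - (\<Sum>\<^sub>\<infinity>t\<in>V. b t * \<nu> t) / (\<Sum>\<^sub>\<infinity>t\<in>V. \<nu> t)\<bar> powr p * \<nu> t))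
        \<le> ennreal ((4 * C + 1) powr p) *
          (\<Sum>\<^sub>\<infinity>t\<in>{t\<in>V. tree_less E t0 t0 t}. ennreal (\<bar>b t - b (tree_parent E t0 t)\<bar> powr p * \<mu> t))"
proof -
  define V' where "V' = {t\<in>V. tree_less E t0 t0 t}"
  define g where "g t = \<bar>b t - b (tree_parent E t0 t)\<bar> powr p * \<mu> t" for t
  define Re where "Re = (\<Sum>\<^sub>\<infinity>t\<in>V'. ennreal (g t))"
  have CPpos: "0 < (4 * C + 1) powr p" using C by simp
  have t0V: "t0 \<in> V" using rt unfolding rooted_tree_def by simp
  show ?thesis
  proof (cases "Re = \<infinity>")
    case True
    have "ennreal ((4 * C + 1) powr p) * Re = \<infinity>"
      using True CPpos by (simp add: ennreal_mult_top)
    then show ?thesis unfolding Re_def V'_def g_def by simp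
  next
    case False
    have gnn: "\<And>t. t \<in> V' \<Longrightarrow> 0 \<le> g t" unfolding g_def V'_def using \<mu>pos by fastforce
    have gs: "g summable_on V'"
      by (rule enn_infsum_finite) (use gnn False in \<open>auto simp: Re_def less_top\<close>)
    define R where "R = infsum g V'"
    have Re_eq: "Re = ennreal R" unfolding Re_def R_def by (rule enn_infsum_real[OF gs gnn])
    have R0: "0 \<le> R" unfolding R_def using gnn by (rule infsum_nonneg)
    define d where "d u = (if u \<in> V \<and> tree_less E t0 t0 u then b u - b (tree_parent E t0 u) else 0)" for u
    have sumd: "(\<Sum>u\<in>{u\<in>V. tree_less E t0 t0 u \<and> tree_le E t0 u t}. d u) = b t - b t0" if "t \<in> V" for t
      unfolding d_def using telescope[OF rt that] .
    have hd: "(\<Sum>\<^sub>\<infinity>t\<in>V. ennreal (\<nu> t * \<bar>\<Sum>u\<in>{u\<in>V. tree_less E t0 t0 u \<and> tree_le E t0 u t}. d u\<bar> powr p))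
        \<le> ennreal (C powr p) * (\<Sum>\<^sub>\<infinity>t\<in>V. ennreal (\<mu> t * \<bar>d t\<bar> powr p))"
      using hyp by blast
    define a where "a t = \<nu> t * \<bar>b t - b t0\<bar> powr p" for t
    have L1: "(\<Sum>\<^sub>\<infinity>t\<in>V. ennreal (\<nu> t * \<bar>\<Sum>u\<in>{u\<in>V. tree_less E t0 t0 u \<and> tree_le E t0 u t}. d u\<bar> powr p))
        = (\<Sum>\<^sub>\<infinity>t\<in>V. ennreal (a t))"
      by (rule infsum_cong) (simp add: sumd a_def)
    have R1: "(\<Sum>\<^sub>\<infinity>t\<in>V. ennreal (\<mu> t * \<bar>d t\<bar> powr p)) = Re"
      unfolding Re_def
    proof (rule infsum_cong_neutral)
      show "ennreal (g x) = 0" if "x \<in> V' - V" for x using that unfolding V'_def by auto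
      show "ennreal (\<mu> x * \<bar>d x\<bar> powr p) = 0" if "x \<in> V - V'" for x
        using that unfolding V'_def d_def by auto
      show "ennreal (\<mu> x * \<bar>d x\<bar> powr p) = ennreal (g x)" if "x \<in> V \<inter> V'" for x
        using that unfolding V'_def d_def g_def by (auto simp: mult.commute)
    qed
    have Ae: "(\<Sum>\<^sub>\<infinity>t\<in>V. ennreal (a t)) \<le> ennreal (C powr p * R)"
      using hd unfolding L1 R1 Re_eq by (simp add: ennreal_mult R0)
    have ann: "\<And>t. t \<in> V \<Longrightarrow> 0 \<le> a t" unfolding a_def using \<nu>pos by (simp add: less_imp_le)
    have as: "a summable_on V"
      by (rule enn_infsum_finite) (use ann Ae in \<open>auto simp: less_top intro: le_less_trans\<close>)
    define A where "A = infsum a V"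
    have "ennreal A \<le> ennreal (C powr p * R)"
      using Ae enn_infsum_real[OF as ann] unfolding A_def by simp
    then have AR: "A \<le> C powr p * R" using R0 by simp
    define f where "f t = b t - b t0" for t
    define N where "N = infsum \<nu> V"
    have \<nu>nn: "\<And>t. t \<in> V \<Longrightarrow> 0 \<le> \<nu> t" using \<nu>pos by (simp add: less_imp_le)
    have "sum \<nu> {t0} \<le> N" unfolding N_def
      by (rule finite_sum_le_infsum) (use \<nu>s t0V \<nu>nn in auto)
    moreover have "0 < \<nu> t0" using \<nu>pos t0V by blast
    ultimately have Npos: "0 < N" by simp
    have a_eq: "a t = \<nu> t * \<bar>f t\<bar> powr p" for t unfolding a_def f_def by simp
    have na: "(\<lambda>t. \<nu> t + a t) summable_on V" using \<nu>s as by (rule summable_on_add)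
    have fa_le: "\<bar>f t\<bar> * \<nu> t \<le> \<nu> t + a t" if "t \<in> V" for t
    proof -
      have "\<bar>f t\<bar> * \<nu> t \<le> (1 + \<bar>f t\<bar> powr p) * \<nu> t"
        using abs_le_one_plus_powr[OF p] \<nu>nn[OF that] by (rule mult_right_mono)
      then show ?thesis unfolding a_eq by (simp add: algebra_simps)
    qed
    have fs: "(\<lambda>t. f t * \<nu> t) summable_on V"
      by (rule summable_comparison_real[OF na]) (use fa_le \<nu>nn in \<open>auto simp: abs_mult\<close>)
    have afs: "(\<lambda>t. \<bar>f t\<bar> * \<nu> t) summable_on V"
      by (rule summable_comparison_real[OF na]) (use fa_le \<nu>nn in \<open>auto simp: abs_mult\<close>)
    have bnu: "(\<lambda>t. b t * \<nu> t) = (\<lambda>t. f t * \<nu> t + b t0 * \<nu> t)"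
      unfolding f_def by (auto simp: algebra_simps)
    have sumb: "(\<Sum>\<^sub>\<infinity>t\<in>V. b t * \<nu> t) = (\<Sum>\<^sub>\<infinity>t\<in>V. f t * \<nu> t) + b t0 * N"
    proof -
      have s1: "(\<lambda>t. b t0 * \<nu> t) summable_on V" by (intro summable_on_cmult_right \<nu>s)
      show ?thesis unfolding bnu N_def infsum_add[OF fs s1] infsum_cmult_right[OF \<nu>s] ..
    qed
    define m where "m = (\<Sum>\<^sub>\<infinity>t\<in>V. f t * \<nu> t) / N"
    have bbar: "(\<Sum>\<^sub>\<infinity>t\<in>V. b t * \<nu> t) / (\<Sum>\<^sub>\<infinity>t\<in>V. \<nu> t) = m + b t0"
      unfolding sumb N_def[symmetric] m_def using Npos by (simp add: field_simps)
    have bdiff: "b t - (m + b t0) = f t - m" for t unfolding f_def by simp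
    define M where "M = (\<Sum>\<^sub>\<infinity>t\<in>V. \<bar>f t\<bar> * \<nu> t) / N"
    have "\<bar>\<Sum>\<^sub>\<infinity>t\<in>V. f t * \<nu> t\<bar> \<le> (\<Sum>\<^sub>\<infinity>t\<in>V. \<bar>f t * \<nu> t\<bar>)"
    proof -
      have "(\<lambda>x. \<bar>f x * \<nu> x\<bar>) summable_on V"
        using fs summable_on_iff_abs_summable_on_real[of "\<lambda>t. f t * \<nu> t" V] by simp
      then show ?thesis using norm_infsum_bound[of "\<lambda>t. f t * \<nu> t" V] by simp
    qed
    also have "\<dots> = (\<Sum>\<^sub>\<infinity>t\<in>V. \<bar>f t\<bar> * \<nu> t)"
      by (rule infsum_cong) (use \<nu>nn in \<open>simp add: abs_mult\<close>)
    finally have mM: "\<bar>m\<bar> \<le> M" unfolding m_def M_def using Npos by (simp add: divide_right_mono)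
    have M0: "0 \<le> M" using mM by simp
    define c where "c = p * M powr (p - 1)"
    have jen_pt: "(M powr p - c * M) * \<nu> t + c * (\<bar>f t\<bar> * \<nu> t) \<le> a t" if "t \<in> V" for t
    proof -
      have "(M powr p + c * (\<bar>f t\<bar> - M)) * \<nu> t \<le> \<bar>f t\<bar> powr p * \<nu> t"
        using tangent_powr[OF p abs_ge_zero M0] \<nu>nn[OF that] unfolding c_def by (rule mult_right_mono)
      then show ?thesis unfolding a_eq by (simp add: algebra_simps)
    qed
    have "(\<Sum>\<^sub>\<infinity>t\<in>V. (M powr p - c * M) * \<nu> t + c * (\<bar>f t\<bar> * \<nu> t))
        = (M powr p - c * M) * N + c * (\<Sum>\<^sub>\<infinity>t\<in>V. \<bar>f t\<bar> * \<nu> t)"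
    proof -
      have s1: "(\<lambda>t. (M powr p - c * M) * \<nu> t) summable_on V" by (intro summable_on_cmult_right \<nu>s)
      have s2: "(\<lambda>t. c * (\<bar>f t\<bar> * \<nu> t)) summable_on V" by (intro summable_on_cmult_right afs)
      show ?thesis unfolding N_def infsum_add[OF s1 s2] infsum_cmult_right[OF \<nu>s] infsum_cmult_right[OF afs] ..
    qed
    also have "\<dots> = M powr p * N"
      unfolding M_def using Npos by (simp add: field_simps)
    moreover have ls: "(\<lambda>t. (M powr p - c * M) * \<nu> t + c * (\<bar>f t\<bar> * \<nu> t)) summable_on V"
      by (intro summable_on_add summable_on_cmult_right \<nu>s afs)
    moreover have "(\<Sum>\<^sub>\<infinity>t\<in>V. (M powr p - c * M) * \<nu> t + c * (\<bar>f t\<bar> * \<nu> t)) \<le> A"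
      unfolding A_def by (rule infsum_mono[OF ls as jen_pt])
    ultimately have MA: "M powr p * N \<le> A" by simp
    have "\<bar>m\<bar> powr p \<le> M powr p" using mM p by (intro powr_mono2) auto
    then have "\<bar>m\<bar> powr p * N \<le> M powr p * N" using Npos by (intro mult_right_mono) auto
    then have mA: "\<bar>m\<bar> powr p * N \<le> A" using MA by linarith
    define h where "h t = \<bar>f t - m\<bar> powr p * \<nu> t" for t
    have h_le: "h t \<le> 2 powr p * (a t + \<bar>m\<bar> powr p * \<nu> t)" if "t \<in> V" for t
    proof -
      have "h t \<le> 2 powr p * (\<bar>f t\<bar> powr p + \<bar>m\<bar> powr p) * \<nu> t"
        unfolding h_def using powr_diff_bound[of p "f t" m] p \<nu>nn[OF that] by (intro mult_right_mono) auto
      then show ?thesis unfolding a_eq by (simp add: algebra_simps)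
    qed
    have ks: "(\<lambda>t. 2 powr p * (a t + \<bar>m\<bar> powr p * \<nu> t)) summable_on V"
      by (intro summable_on_cmult_right summable_on_add as \<nu>s)
    have hnn: "\<And>t. t \<in> V \<Longrightarrow> 0 \<le> h t" unfolding h_def using \<nu>nn by simp
    have hs: "h summable_on V"
      by (rule summable_comparison_real[OF ks]) (use h_le hnn in auto)
    have "infsum h V \<le> (\<Sum>\<^sub>\<infinity>t\<in>V. 2 powr p * (a t + \<bar>m\<bar> powr p * \<nu> t))"
      by (rule infsum_mono[OF hs ks h_le])
    also have "\<dots> = 2 powr p * (A + \<bar>m\<bar> powr p * N)"
    proof -
      have s1: "(\<lambda>t. \<bar>m\<bar> powr p * \<nu> t) summable_on V" by (intro summable_on_cmult_right \<nu>s)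
      have s2: "(\<lambda>t. a t + \<bar>m\<bar> powr p * \<nu> t) summable_on V" by (intro summable_on_add as s1)
      show ?thesis unfolding A_def N_def infsum_cmult_right[OF s2] infsum_add[OF as s1] infsum_cmult_right[OF \<nu>s] ..
    qed
    also have "\<dots> \<le> 2 powr p * (2 * A)" using mA by simp
    also have "\<dots> \<le> 2 * 2 powr p * C powr p * R" using AR by simp
    also have "\<dots> \<le> (4 * C + 1) powr p * R"
    proof (rule mult_right_mono[OF _ R0])
      have "2 powr 1 \<le> 2 powr p" using p by (intro powr_mono) auto
      then have "2 * 2 powr p * C powr p \<le> 2 powr p * 2 powr p * C powr p"
        by (intro mult_right_mono) auto
      also have "\<dots> = (2 * 2 * C) powr p" by (simp only: powr_mult)
      also have "\<dots> \<le> (4 * C + 1) powr p" using C p by (intro powr_mono2) auto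
      finally show "2 * 2 powr p * C powr p \<le> (4 * C + 1) powr p" .
    qed
    finally have hR: "infsum h V \<le> (4 * C + 1) powr p * R" .
    have "(\<Sum>\<^sub>\<infinity>t\<in>V. ennreal (\<bar>b t - (\<Sum>\<^sub>\<infinity>t\<in>V. b t * \<nu> t) / (\<Sum>\<^sub>\<infinity>t\<in>V. \<nu> t)\<bar> powr p * \<nu> t))
        = (\<Sum>\<^sub>\<infinity>t\<in>V. ennreal (h t))"
      unfolding bbar bdiff h_def ..
    also have "\<dots> = ennreal (infsum h V)" by (rule enn_infsum_real[OF hs hnn])
    also have "\<dots> \<le> ennreal ((4 * C + 1) powr p * R)" using hR by (simp add: ennreal_leI)
    also have "\<dots> = ennreal ((4 * C + 1) powr p) * Re" unfolding Re_eq using R0 by (simp add: ennreal_mult)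
    finally show ?thesis unfolding Re_def V'_def g_def .
  qed
qed

theorem lemma2p1:
  fixes p C :: real
  assumes "1 \<le> p" and "0 \<le> C"
  shows "\<exists>CP\<ge>0. \<forall>(V::'a set) E t0 (\<nu>::'a \<Rightarrow> real) (\<mu>::'a \<Rightarrow> real).
     rooted_tree V E t0 \<and>
     (\<forall>t\<in>V. 0 < \<nu> t) \<and> (\<forall>t\<in>V. 0 < \<mu> t) \<and>
     \<nu> summable_on V \<and> \<mu> summable_on V \<and>
     (\<forall>b::'a \<Rightarrow> real.
        (\<Sum>\<^sub>\<infinity>t\<in>V. ennreal (\<nu> t * \<bar>\<Sum>u\<in>{u\<in>V. tree_less E t0 t0 u \<and> tree_le E t0 u t}. b u\<bar> powr p))
        \<le> ennreal (C powr p) * (\<Sum>\<^sub>\<infinity>t\<in>V. ennreal (\<mu> t * \<bar>b t\<bar> powr p)))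
     \<longrightarrow>
     (\<forall>b::'a \<Rightarrow> real.
        let bbar = (\<Sum>\<^sub>\<infinity>t\<in>V. b t * \<nu> t) / (\<Sum>\<^sub>\<infinity>t\<in>V. \<nu> t) in
        (\<Sum>\<^sub>\<infinity>t\<in>V. ennreal (\<bar>b t - bbar\<bar> powr p * \<nu> t))
        \<le> ennreal (CP powr p) *
          (\<Sum>\<^sub>\<infinity>t\<in>{t\<in>V. tree_less E t0 t0 t}. ennreal (\<bar>b t - b (tree_parent E t0 t)\<bar> powr p * \<mu> t)))"
  apply (intro exI[of _ "4 * C + 1"] conjI allI impI)
  using assms apply simp
  unfolding Let_def
  apply (elim conjE)
  apply (rule main[OF assms])
      apply assumption+
  done

end
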